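(* Let $\mathbf A=(A,\land,\lor,{}',0,1)$ be a pseudo-Kleene lattice. Then $\mathbf A$ is super-paraorthomodular if and only if $\mathbf A$ is a pasting of its Kleene blocks, i.e. for all $x,y\in A$: $x\leq y$ if and only if there is a Kleene block $\mathbf K$ of $\mathbf A$ with $x,y\in K$ and $x\leq y$ in $\mathbf K$.
   Context: A pseudo-Kleene lattice is an algebra $(A,\land,\lor,{}',0,1)$ such that $(A,\land,\lor,0,1)$ is a bounded lattice, ${}'$ is an antitone involution ($x\leq y$ implies $y'\leq x'$, and $x''=x$), and $x\land x'\leq y\lor y'$ for all $x,y$. A pseudo-Kleene lattice is super-paraorthomodular (sp-orthomodular) if it satisfies, for all $x,y$: (SP1) if $x\leq y$ and $x'\land y=(x\land x')\lor(y\land y')$, then $y\land(x\lor x')=x\lor(y\land y')$; (SP2) if $x\leq y$, then $(x\land x')\lor(y\land y')=(x'\land y)\land(x'\land y)'$. A Kleene sub-lattice of a pseudo-Kleene lattice $\mathbf A$ is a subset containing $0,1$ and closed under $\land,\lor,{}'$ which is distributive as a lattice; a Kleene block is a maximal (under inclusion) Kleene sub-lattice. *)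

theory Defs
  imports Main
begin

definition pseudo_kleene :: "('a::bounded_lattice \<Rightarrow> 'a) \<Rightarrow> bool" where
  "pseudo_kleene c \<longleftrightarrow>
     (\<forall>x y. x \<le> y \<longrightarrow> c y \<le> c x) \<and>
     (\<forall>x. c (c x) = x) \<and>
     (\<forall>x y. inf x (c x) \<le> sup y (c y))"

definition sp_orthomodular :: "('a::bounded_lattice \<Rightarrow> 'a) \<Rightarrow> bool" where
  "sp_orthomodular c \<longleftrightarrow>
     (\<forall>x y. x \<le> y \<and> inf (c x) y = sup (inf x (c x)) (inf y (c y))
        \<longrightarrow> inf y (sup x (c x)) = sup x (inf y (c y))) \<and>
     (\<forall>x y. x \<le> y \<longrightarrow>
        sup (inf x (c x)) (inf y (c y)) = inf (inf (c x) y) (c (inf (c x) y)))"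

definition kleene_sublattice :: "('a::bounded_lattice \<Rightarrow> 'a) \<Rightarrow> 'a set \<Rightarrow> bool" where
  "kleene_sublattice c K \<longleftrightarrow>
     bot \<in> K \<and> top \<in> K \<and>
     (\<forall>x\<in>K. \<forall>y\<in>K. inf x y \<in> K) \<and>
     (\<forall>x\<in>K. \<forall>y\<in>K. sup x y \<in> K) \<and>
     (\<forall>x\<in>K. c x \<in> K) \<and>
     (\<forall>x\<in>K. \<forall>y\<in>K. \<forall>z\<in>K. inf x (sup y z) = sup (inf x y) (inf x z))"

definition kleene_block :: "('a::bounded_lattice \<Rightarrow> 'a) \<Rightarrow> 'a set \<Rightarrow> bool" where
  "kleene_block c K \<longleftrightarrow> kleene_sublattice c K \<and>
     (\<forall>L. kleene_sublattice c L \<and> K \<subseteq> L \<longrightarrow> L = K)"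

end

theory Submission
  imports Defs
begin

unbundle lattice_syntax

locale pkl =
  fixes c :: "'a::bounded_lattice \<Rightarrow> 'a"
  assumes anti: "\<And>x y. x \<le> y \<Longrightarrow> c y \<le> c x"
    and inv[simp]: "\<And>x. c (c x) = x"
    and kl: "\<And>x y. inf x (c x) \<le> sup y (c y)"
begin
lemma c_le_iff[simp]: "c x \<le> c y \<longleftrightarrow> y \<le> x"
  by (metis anti inv)
lemma dm_sup[simp]: "c (sup x y) = inf (c x) (c y)"
proof (rule antisym)
  show "c (sup x y) \<le> inf (c x) (c y)" by (simp add: anti)
  have "sup x y \<le> c (inf (c x) (c y))"
    by (metis anti inf_le1 inf_le2 inv sup_least)
  then show "inf (c x) (c y) \<le> c (sup x y)" by (metis anti inv)
qed
lemma dm_inf[simp]: "c (inf x y) = sup (c x) (c y)"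
  by (metis dm_sup inv)
lemma c_bot[simp]: "c bot = top"
  by (metis anti bot_least inv top.extremum_unique)
lemma c_top[simp]: "c top = bot"
  by (metis c_bot inv)
lemma le_c_swap: "x \<le> c y \<longleftrightarrow> y \<le> c x"
  by (metis c_le_iff inv)
end

locale spl = pkl +
  assumes sp1: "\<And>x y. x \<le> y \<Longrightarrow> inf (c x) y = sup (inf x (c x)) (inf y (c y)) \<Longrightarrow> inf y (sup x (c x)) = sup x (inf y (c y))"
  and sp2: "\<And>x y. x \<le> y \<Longrightarrow> sup (inf x (c x)) (inf y (c y)) = inf (inf (c x) y) (c (inf (c x) y))"
begin

lemma L2:
  assumes xy: "x \<le> y"
  shows "inf y (sup x (c y)) \<le> sup x (inf y (c y))"
proof -
  define y0 where "y0 = inf y (sup x (c y))"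
  have xy0: "x \<le> y0" using xy by (simp add: y0_def)
  have y0y: "y0 \<le> y" by (simp add: y0_def)
  have cy: "c y \<le> c y0" using y0y by (rule anti)
  have "inf (c x) y0 \<le> sup x (c y0)"
  proof -
    have "inf (c x) y0 \<le> y0" by simp
    also have "\<dots> \<le> sup x (c y)" by (simp add: y0_def)
    also have "\<dots> \<le> sup x (c y0)" using cy by (simp add: le_supI2)
    finally show ?thesis .
  qed
  hence e: "inf (inf (c x) y0) (c (inf (c x) y0)) = inf (c x) y0"
    by (simp add: inf_absorb1)
  have h2: "sup (inf x (c x)) (inf y0 (c y0)) = inf (c x) y0"
    using sp2[OF xy0] e by simp
  have s1: "inf y0 (sup x (c x)) = sup x (inf y0 (c y0))"
    using sp1[OF xy0 h2[symmetric]] .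
  have cyx: "c y \<le> c x" using xy by (rule anti)
  have "y0 \<le> sup x (c x)" unfolding y0_def using cyx
    by (meson inf_le2 order_trans sup_mono order_refl)
  hence y0eq: "y0 = sup x (inf y0 (c y0))" using s1 by (simp add: inf_absorb1)
  have "inf y0 (c y0) \<le> inf (c x) y0" using h2 by (metis sup_ge2)
  also have "\<dots> = inf (inf (c x) y) (sup x (c y))" by (simp add: y0_def inf_assoc)
  also have "\<dots> = sup (inf x (c x)) (inf y (c y))"
    using sp2[OF xy] by simp
  also have "\<dots> \<le> sup x (inf y (c y))" by (simp add: le_supI1)
  finally have "inf y0 (c y0) \<le> sup x (inf y (c y))" .
  hence "sup x (inf y0 (c y0)) \<le> sup x (inf y (c y))" by simp
  hence "y0 \<le> sup x (inf y (c y))" using y0eq by simp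
  thus ?thesis by (simp add: y0_def)
qed

lemma L3:
  assumes xy: "x \<le> y"
  shows "inf y (sup x (c x)) \<le> sup x (inf y (c x))"
proof -
  have "c y \<le> c x" using xy by (rule anti)
  from L2[OF this] have "inf (c x) (sup (c y) x) \<le> sup (c y) (inf (c x) x)" by simp
  hence "c (sup (c y) (inf (c x) x)) \<le> c (inf (c x) (sup (c y) x))" by (rule anti)
  thus ?thesis by (simp add: inf_commute sup_commute)
qed
end

definition fj :: "(nat \<Rightarrow> 'a::bounded_lattice) \<Rightarrow> nat list \<Rightarrow> nat set \<Rightarrow> 'a" where
  "fj f xs D = foldr (\<lambda>i acc. if i \<in> D then sup (f i) acc else acc) xs bot"
definition fm :: "(nat \<Rightarrow> 'a::bounded_lattice) \<Rightarrow> nat list \<Rightarrow> nat set \<Rightarrow> 'a" where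
  "fm f xs D = foldr (\<lambda>i acc. if i \<in> D then inf (f i) acc else acc) xs top"

lemma fj_le_iff: "fj f xs D \<le> z \<longleftrightarrow> (\<forall>i\<in>set xs \<inter> D. f i \<le> z)"
  unfolding fj_def by (induction xs) auto
lemma fm_ge_iff: "z \<le> fm f xs D \<longleftrightarrow> (\<forall>i\<in>set xs \<inter> D. z \<le> f i)"
  unfolding fm_def by (induction xs) auto
lemma fj_ge: "i \<in> set xs \<Longrightarrow> i \<in> D \<Longrightarrow> f i \<le> fj f xs D"
  using fj_le_iff[of f xs D "fj f xs D"] by auto
lemma fm_le: "i \<in> set xs \<Longrightarrow> i \<in> D \<Longrightarrow> fm f xs D \<le> f i"
  using fm_ge_iff[of "fm f xs D" f xs D] by auto
lemma fj_union: "fj f xs (D \<union> E) = sup (fj f xs D) (fj f xs E)"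
  by (rule antisym) (auto simp: fj_le_iff intro: fj_ge le_supI1 le_supI2)
lemma fm_union: "fm f xs (D \<union> E) = inf (fm f xs D) (fm f xs E)"
  by (rule antisym) (auto simp: fm_ge_iff intro: fm_le le_infI1 le_infI2)
lemma fm_cong: "set xs \<inter> D = set xs \<inter> E \<Longrightarrow> fm f xs D = fm f xs E"
  by (rule antisym) (auto simp: fm_ge_iff intro: fm_le)

lemma (in pkl) c_fj: "c (fj f xs D) = fm (\<lambda>i. c (f i)) xs D"
  unfolding fj_def fm_def by (induction xs) auto

definition Rset :: "(nat \<times> nat) set" where
  "Rset = {(0,0), (0,1), (0,2), (0,3), (0,4), (0,5), (0,6), (0,7), (1,0), (1,1), (1,2), (1,3), (1,4), (1,6), (1,7), (2,0), (2,1), (2,3), (2,4), (2,6), (2,7), (3,0), (3,1), (3,2), (3,3), (3,4), (3,5), (3,6), (4,0), (4,1), (4,2), (4,3), (4,6), (5,0), (5,3), (5,6), (6,0), (6,1), (6,2), (6,3), (6,4), (6,5), (7,0), (7,1), (7,2)}"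
definition Mset :: "nat set \<Rightarrow> nat set" where
  "Mset D = Set.filter (\<lambda>i. \<forall>j\<in>D. (j,i) \<in> Rset) {0..<9}"
lemma upt9: "[0..<9] = [0,1,2,3,4,5,6,7,8::nat]"
  by code_simp

definition DM :: "(nat set \<times> nat set) list" where
  "DM = [({}, {0,1,2,3,4,5,6,7,8}), ({0}, {0,1,2,3,4,5,6,7}), ({0,1}, {0,1,2,3,4,6,7}), ({0,1,2}, {0,1,3,4,6,7}), ({0,3}, {0,1,2,3,4,5,6}), ({0,1,3}, {0,1,2,3,4,6}), ({0,1,2,3}, {0,1,3,4,6}), ({0,1,3,4}, {0,1,2,3,6}), ({0,1,2,3,4}, {0,1,3,6}), ({0,1,2,3,4,5}, {0,3,6}), ({0,3,6}, {0,1,2,3,4,5}), ({0,1,3,6}, {0,1,2,3,4}), ({0,1,2,3,6}, {0,1,3,4}), ({0,1,3,4,6}, {0,1,2,3}), ({0,1,2,3,4,6}, {0,1,3}), ({0,1,2,3,4,5,6}, {0,3}), ({0,1,3,4,6,7}, {0,1,2}), ({0,1,2,3,4,6,7}, {0,1}), ({0,1,2,3,4,5,6,7}, {0}), ({0,1,2,3,4,5,6,7,8}, {})]"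
definition Ds :: "nat set list" where "Ds = map fst DM"

lemma DM_M: "\<forall>(D,E)\<in>set DM. Mset D = E"
  by code_simp
lemma DM_int: "\<forall>(D1,E1)\<in>set DM. \<forall>(D2,E2)\<in>set DM. (D1 \<inter> D2, E1 \<union> E2) \<in> set DM"
  by code_simp
lemma DM_un: "\<forall>(D1,E1)\<in>set DM. \<forall>(D2,E2)\<in>set DM. D1 \<union> D2 \<in> set (map fst DM)"
  by code_simp
lemma DM_c: "\<forall>(D,E)\<in>set DM. \<exists>(D',E')\<in>set DM. E' = D"
  by code_simp
lemma DM_sub: "\<forall>(D,E)\<in>set DM. D \<subseteq> {0..<9}"
  by code_simp


locale spab = spl c for c :: "'a::bounded_lattice \<Rightarrow> 'a" +
  fixes a b :: "'a" assumes ab: "a \<le> b"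
begin
definition g :: "nat \<Rightarrow> 'a" where
  "g i = (if i=0 then inf a (c b) else if i=1 then inf a (c a) else if i=2 then a
    else if i=3 then inf b (c b) else if i=4 then inf b (c a) else if i=5 then b
    else if i=6 then c b else if i=7 then c a else top)"
definition HJ where "HJ D = fj g [0..<9] D"
definition HM where "HM D = fm (\<lambda>i. c (g i)) [0..<9] (Mset D)"

lemma cba: "c b \<le> c a" using ab by (rule anti)

lemma gR: "(j,i) \<in> Rset \<Longrightarrow> g j \<le> c (g i)"
  using ab cba kl[of a b] kl[of b a]
  by (auto simp: Rset_def g_def le_infI1 le_infI2 le_supI1 le_supI2 inf_commute sup_commute intro: order_trans)


lemma cx5: "c a \<sqinter> (c b \<squnion> a) \<sqinter> b \<le> a \<sqinter> c a \<squnion> b \<sqinter> c b"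
proof -
  have "c a \<sqinter> (c b \<squnion> a) \<sqinter> b = (c a \<sqinter> b) \<sqinter> c (c a \<sqinter> b)"
    by (simp add: inf_aci sup_commute)
  also have "\<dots> = a \<sqinter> c a \<squnion> b \<sqinter> c b" using sp2[OF ab] by simp
  finally show ?thesis by simp
qed
lemma cx6: "(c b \<squnion> a) \<sqinter> b \<le> a \<squnion> b \<sqinter> c b"
  using L2[OF ab] by (simp add: inf_commute sup_commute)
lemma cx8: "(c a \<squnion> a) \<sqinter> b \<le> a \<squnion> b \<sqinter> c a"
  using L3[OF ab] by (simp add: inf_commute sup_commute)
lemma cx11: "c a \<sqinter> (c b \<squnion> a) \<le> a \<sqinter> c a \<squnion> c b"
  using L2[OF cba] by (simp add: inf_commute sup_commute)
lemma cx13: "c a \<sqinter> (c b \<squnion> b) \<le> b \<sqinter> c a \<squnion> c b"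
  using L3[OF cba] by (simp add: inf_commute sup_commute)

lemma cx14: "(c a \<squnion> a) \<sqinter> (c b \<squnion> b) \<le> a \<squnion> b \<sqinter> c a \<squnion> c b"
proof -
  have "a \<le> b \<squnion> c b" using ab by (simp add: le_supI1)
  from L3[OF this] have "(b \<squnion> c b) \<sqinter> (a \<squnion> c a) \<le> a \<squnion> (b \<squnion> c b) \<sqinter> c a" .
  also have "\<dots> \<le> a \<squnion> (b \<sqinter> c a \<squnion> c b)"
    using cx13 by (simp add: inf_commute sup_commute le_supI2)
  finally show ?thesis by (simp add: inf_commute sup_aci)
qed

lemma HJ_le_HM: "HJ D \<le> HM D"
  unfolding HJ_def HM_def by (auto simp: fj_le_iff fm_ge_iff Mset_def gR)
lemma HM_le: "i \<in> Mset D \<Longrightarrow> HM D \<le> c (g i)"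
  unfolding HM_def by (rule fm_le) (auto simp: Mset_def)
lemma HJ_ge: "j \<in> D \<Longrightarrow> j < 9 \<Longrightarrow> g j \<le> HJ D"
  unfolding HJ_def by (rule fj_ge) auto

lemma hmj0: "HM {} \<le> HJ {}"
proof -
  have 1: "HM {} \<le> c (g 8)" by (intro le_infI HM_le; simp add: Mset_def Rset_def)
  have 2: "bot \<le> HJ {}" by simp
  have 3: "c (g 8) \<le> bot" by (simp add: g_def)
  show ?thesis using 1 2 3 by (meson order_trans)
qed

lemma hmj1: "HM {0} \<le> HJ {0}"
proof -
  have 1: "HM {0} \<le> c (g 5) \<sqinter> c (g 7)" by (intro le_infI HM_le; simp add: Mset_def Rset_def)
  have 2: "g 0 \<le> HJ {0}" by (intro le_supI HJ_ge; simp)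
  have 3: "c (g 5) \<sqinter> c (g 7) \<le> g 0" by (simp add: g_def)
  show ?thesis using 1 2 3 by (meson order_trans)
qed

lemma hmj2: "HM {0,1} \<le> HJ {0,1}"
proof -
  have 1: "HM {0,1} \<le> c (g 2) \<sqinter> c (g 7)" by (intro le_infI HM_le; simp add: Mset_def Rset_def)
  have 2: "g 1 \<le> HJ {0,1}" by (intro le_supI HJ_ge; simp)
  have 3: "c (g 2) \<sqinter> c (g 7) \<le> g 1" by (simp add: g_def)
  show ?thesis using 1 2 3 by (meson order_trans)
qed

lemma hmj3: "HM {0,1,2} \<le> HJ {0,1,2}"
proof -
  have 1: "HM {0,1,2} \<le> c (g 7)" by (intro le_infI HM_le; simp add: Mset_def Rset_def)
  have 2: "g 2 \<le> HJ {0,1,2}" by (intro le_supI HJ_ge; simp)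
  have 3: "c (g 7) \<le> g 2" by (simp add: g_def)
  show ?thesis using 1 2 3 by (meson order_trans)
qed

lemma hmj4: "HM {0,3} \<le> HJ {0,3}"
proof -
  have 1: "HM {0,3} \<le> c (g 5) \<sqinter> c (g 6)" by (intro le_infI HM_le; simp add: Mset_def Rset_def)
  have 2: "g 3 \<le> HJ {0,3}" by (intro le_supI HJ_ge; simp)
  have 3: "c (g 5) \<sqinter> c (g 6) \<le> g 3" by (simp add: g_def)
  show ?thesis using 1 2 3 by (meson order_trans)
qed

lemma hmj5: "HM {0,1,3} \<le> HJ {0,1,3}"
proof -
  have 1: "HM {0,1,3} \<le> c (g 2) \<sqinter> c (g 4) \<sqinter> c (g 6)" by (intro le_infI HM_le; simp add: Mset_def Rset_def)
  have 2: "g 1 \<squnion> g 3 \<le> HJ {0,1,3}" by (intro le_supI HJ_ge; simp)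
  have 3: "c (g 2) \<sqinter> c (g 4) \<sqinter> c (g 6) \<le> g 1 \<squnion> g 3" using cx5 by (simp add: g_def)
  show ?thesis using 1 2 3 by (meson order_trans)
qed

lemma hmj6: "HM {0,1,2,3} \<le> HJ {0,1,2,3}"
proof -
  have 1: "HM {0,1,2,3} \<le> c (g 4) \<sqinter> c (g 6)" by (intro le_infI HM_le; simp add: Mset_def Rset_def)
  have 2: "g 2 \<squnion> g 3 \<le> HJ {0,1,2,3}" by (intro le_supI HJ_ge; simp)
  have 3: "c (g 4) \<sqinter> c (g 6) \<le> g 2 \<squnion> g 3" using cx6 by (simp add: g_def)
  show ?thesis using 1 2 3 by (meson order_trans)
qed

lemma hmj7: "HM {0,1,3,4} \<le> HJ {0,1,3,4}"
proof -
  have 1: "HM {0,1,3,4} \<le> c (g 2) \<sqinter> c (g 6)" by (intro le_infI HM_le; simp add: Mset_def Rset_def)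
  have 2: "g 4 \<le> HJ {0,1,3,4}" by (intro le_supI HJ_ge; simp)
  have 3: "c (g 2) \<sqinter> c (g 6) \<le> g 4" by (simp add: g_def)
  show ?thesis using 1 2 3 by (meson order_trans)
qed

lemma hmj8: "HM {0,1,2,3,4} \<le> HJ {0,1,2,3,4}"
proof -
  have 1: "HM {0,1,2,3,4} \<le> c (g 1) \<sqinter> c (g 6)" by (intro le_infI HM_le; simp add: Mset_def Rset_def)
  have 2: "g 2 \<squnion> g 4 \<le> HJ {0,1,2,3,4}" by (intro le_supI HJ_ge; simp)
  have 3: "c (g 1) \<sqinter> c (g 6) \<le> g 2 \<squnion> g 4" using cx8 by (simp add: g_def)
  show ?thesis using 1 2 3 by (meson order_trans)
qed

lemma hmj9: "HM {0,1,2,3,4,5} \<le> HJ {0,1,2,3,4,5}"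
proof -
  have 1: "HM {0,1,2,3,4,5} \<le> c (g 6)" by (intro le_infI HM_le; simp add: Mset_def Rset_def)
  have 2: "g 5 \<le> HJ {0,1,2,3,4,5}" by (intro le_supI HJ_ge; simp)
  have 3: "c (g 6) \<le> g 5" by (simp add: g_def)
  show ?thesis using 1 2 3 by (meson order_trans)
qed

lemma hmj10: "HM {0,3,6} \<le> HJ {0,3,6}"
proof -
  have 1: "HM {0,3,6} \<le> c (g 5)" by (intro le_infI HM_le; simp add: Mset_def Rset_def)
  have 2: "g 6 \<le> HJ {0,3,6}" by (intro le_supI HJ_ge; simp)
  have 3: "c (g 5) \<le> g 6" by (simp add: g_def)
  show ?thesis using 1 2 3 by (meson order_trans)
qed

lemma hmj11: "HM {0,1,3,6} \<le> HJ {0,1,3,6}"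
proof -
  have 1: "HM {0,1,3,6} \<le> c (g 2) \<sqinter> c (g 4)" by (intro le_infI HM_le; simp add: Mset_def Rset_def)
  have 2: "g 1 \<squnion> g 6 \<le> HJ {0,1,3,6}" by (intro le_supI HJ_ge; simp)
  have 3: "c (g 2) \<sqinter> c (g 4) \<le> g 1 \<squnion> g 6" using cx11 by (simp add: g_def)
  show ?thesis using 1 2 3 by (meson order_trans)
qed

lemma hmj12: "HM {0,1,2,3,6} \<le> HJ {0,1,2,3,6}"
proof -
  have 1: "HM {0,1,2,3,6} \<le> c (g 4)" by (intro le_infI HM_le; simp add: Mset_def Rset_def)
  have 2: "g 2 \<squnion> g 6 \<le> HJ {0,1,2,3,6}" by (intro le_supI HJ_ge; simp)
  have 3: "c (g 4) \<le> g 2 \<squnion> g 6" by (simp add: g_def)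
  show ?thesis using 1 2 3 by (meson order_trans)
qed

lemma hmj13: "HM {0,1,3,4,6} \<le> HJ {0,1,3,4,6}"
proof -
  have 1: "HM {0,1,3,4,6} \<le> c (g 2) \<sqinter> c (g 3)" by (intro le_infI HM_le; simp add: Mset_def Rset_def)
  have 2: "g 4 \<squnion> g 6 \<le> HJ {0,1,3,4,6}" by (intro le_supI HJ_ge; simp)
  have 3: "c (g 2) \<sqinter> c (g 3) \<le> g 4 \<squnion> g 6" using cx13 by (simp add: g_def)
  show ?thesis using 1 2 3 by (meson order_trans)
qed

lemma hmj14: "HM {0,1,2,3,4,6} \<le> HJ {0,1,2,3,4,6}"
proof -
  have 1: "HM {0,1,2,3,4,6} \<le> c (g 1) \<sqinter> c (g 3)" by (intro le_infI HM_le; simp add: Mset_def Rset_def)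
  have 2: "g 2 \<squnion> g 4 \<squnion> g 6 \<le> HJ {0,1,2,3,4,6}" by (intro le_supI HJ_ge; simp)
  have 3: "c (g 1) \<sqinter> c (g 3) \<le> g 2 \<squnion> g 4 \<squnion> g 6" using cx14 by (simp add: g_def)
  show ?thesis using 1 2 3 by (meson order_trans)
qed

lemma hmj15: "HM {0,1,2,3,4,5,6} \<le> HJ {0,1,2,3,4,5,6}"
proof -
  have 1: "HM {0,1,2,3,4,5,6} \<le> c (g 3)" by (intro le_infI HM_le; simp add: Mset_def Rset_def)
  have 2: "g 5 \<squnion> g 6 \<le> HJ {0,1,2,3,4,5,6}" by (intro le_supI HJ_ge; simp)
  have 3: "c (g 3) \<le> g 5 \<squnion> g 6" by (simp add: g_def)
  show ?thesis using 1 2 3 by (meson order_trans)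
qed

lemma hmj16: "HM {0,1,3,4,6,7} \<le> HJ {0,1,3,4,6,7}"
proof -
  have 1: "HM {0,1,3,4,6,7} \<le> c (g 2)" by (intro le_infI HM_le; simp add: Mset_def Rset_def)
  have 2: "g 7 \<le> HJ {0,1,3,4,6,7}" by (intro le_supI HJ_ge; simp)
  have 3: "c (g 2) \<le> g 7" by (simp add: g_def)
  show ?thesis using 1 2 3 by (meson order_trans)
qed

lemma hmj17: "HM {0,1,2,3,4,6,7} \<le> HJ {0,1,2,3,4,6,7}"
proof -
  have 1: "HM {0,1,2,3,4,6,7} \<le> c (g 1)" by (intro le_infI HM_le; simp add: Mset_def Rset_def)
  have 2: "g 2 \<squnion> g 7 \<le> HJ {0,1,2,3,4,6,7}" by (intro le_supI HJ_ge; simp)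
  have 3: "c (g 1) \<le> g 2 \<squnion> g 7" by (simp add: g_def)
  show ?thesis using 1 2 3 by (meson order_trans)
qed

lemma hmj18: "HM {0,1,2,3,4,5,6,7} \<le> HJ {0,1,2,3,4,5,6,7}"
proof -
  have 1: "HM {0,1,2,3,4,5,6,7} \<le> c (g 0)" by (intro le_infI HM_le; simp add: Mset_def Rset_def)
  have 2: "g 5 \<squnion> g 7 \<le> HJ {0,1,2,3,4,5,6,7}" by (intro le_supI HJ_ge; simp)
  have 3: "c (g 0) \<le> g 5 \<squnion> g 7" by (simp add: g_def)
  show ?thesis using 1 2 3 by (meson order_trans)
qed

lemma hmj19: "HM {0,1,2,3,4,5,6,7,8} \<le> HJ {0,1,2,3,4,5,6,7,8}"
proof -
  have 1: "HM {0,1,2,3,4,5,6,7,8} \<le> top" by simp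
  have 2: "g 8 \<le> HJ {0,1,2,3,4,5,6,7,8}" by (intro le_supI HJ_ge; simp)
  have 3: "top \<le> g 8" by (simp add: g_def)
  show ?thesis using 1 2 3 by (meson order_trans)
qed


lemma HM_HJ_all: "list_all (\<lambda>D. HM D \<le> HJ D) Ds"
  unfolding Ds_def DM_def by (simp add: hmj0[simplified] hmj1[simplified] hmj2[simplified] hmj3[simplified] hmj4[simplified] hmj5[simplified] hmj6[simplified] hmj7[simplified] hmj8[simplified] hmj9[simplified] hmj10[simplified] hmj11[simplified] hmj12[simplified] hmj13[simplified] hmj14[simplified] hmj15[simplified] hmj16[simplified] hmj17[simplified] hmj18[simplified] hmj19[simplified])

lemma HM_HJ: "D \<in> set Ds \<Longrightarrow> HM D = HJ D"
proof -
  assume "D \<in> set Ds"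
  hence "HM D \<le> HJ D" using HM_HJ_all by (simp add: list_all_iff)
  thus ?thesis using HJ_le_HM by (rule antisym)
qed

lemma Ds_DM: "D \<in> set Ds \<Longrightarrow> (D, Mset D) \<in> set DM"
  using DM_M unfolding Ds_def by force

lemma meet_HJ: "D1 \<in> set Ds \<Longrightarrow> D2 \<in> set Ds \<Longrightarrow> D1 \<inter> D2 \<in> set Ds \<and> HJ D1 \<sqinter> HJ D2 = HJ (D1 \<inter> D2)"
proof -
  assume d1: "D1 \<in> set Ds" and d2: "D2 \<in> set Ds"
  have p: "(D1 \<inter> D2, Mset D1 \<union> Mset D2) \<in> set DM"
    using DM_int Ds_DM[OF d1] Ds_DM[OF d2] by fast
  hence i: "D1 \<inter> D2 \<in> set Ds" unfolding Ds_def by force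
  have m: "Mset (D1 \<inter> D2) = Mset D1 \<union> Mset D2" using DM_M p by fast
  have "HJ D1 \<sqinter> HJ D2 = HM D1 \<sqinter> HM D2" using HM_HJ d1 d2 by simp
  also have "\<dots> = HM (D1 \<inter> D2)" unfolding HM_def m fm_union ..
  also have "\<dots> = HJ (D1 \<inter> D2)" using HM_HJ[OF i] .
  finally show ?thesis using i by simp
qed

lemma join_HJ: "D1 \<in> set Ds \<Longrightarrow> D2 \<in> set Ds \<Longrightarrow> D1 \<union> D2 \<in> set Ds \<and> HJ D1 \<squnion> HJ D2 = HJ (D1 \<union> D2)"
proof -
  assume d1: "D1 \<in> set Ds" and d2: "D2 \<in> set Ds"
  have "D1 \<union> D2 \<in> set Ds"
    using DM_un Ds_DM[OF d1] Ds_DM[OF d2] unfolding Ds_def by fast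
  thus ?thesis by (simp add: HJ_def fj_union)
qed

lemma c_HJ: "D \<in> set Ds \<Longrightarrow> \<exists>D'\<in>set Ds. c (HJ D) = HJ D'"
proof -
  assume d: "D \<in> set Ds"
  obtain D' E' where p: "(D',E') \<in> set DM" and e: "E' = D" using DM_c Ds_DM[OF d] by fast
  have d': "D' \<in> set Ds" using p unfolding Ds_def by force
  have "Mset D' = D" using DM_M p e by fast
  hence "c (HJ D) = HM D'" unfolding HJ_def HM_def c_fj by simp
  also have "\<dots> = HJ D'" using HM_HJ[OF d'] .
  finally show ?thesis using d' by blast
qed

definition SS where "SS = HJ ` set Ds"

lemma SS_kleene: "kleene_sublattice c SS"
proof -
  have b: "{} \<in> set Ds" "{0,1,2,3,4,5,6,7,8} \<in> set Ds"
    by (simp_all add: Ds_def DM_def)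
  have "HJ {} = bot" by (simp add: HJ_def fj_def upt9)
  hence 1: "bot \<in> SS" using b unfolding SS_def by (metis image_eqI)
  have "HJ {0,1,2,3,4,5,6,7,8} = top" by (simp add: HJ_def fj_def g_def upt9)
  hence 2: "top \<in> SS" using b unfolding SS_def by (metis image_eqI)
  have 3: "\<forall>x\<in>SS. \<forall>y\<in>SS. x \<sqinter> y \<in> SS" unfolding SS_def using meet_HJ by force
  have 4: "\<forall>x\<in>SS. \<forall>y\<in>SS. x \<squnion> y \<in> SS" unfolding SS_def using join_HJ by force
  have 5: "\<forall>x\<in>SS. c x \<in> SS" unfolding SS_def using c_HJ by force
  have 6: "\<forall>x\<in>SS. \<forall>y\<in>SS. \<forall>z\<in>SS. x \<sqinter> (y \<squnion> z) = x \<sqinter> y \<squnion> x \<sqinter> z"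
  proof (intro ballI)
    fix x y z assume "x \<in> SS" "y \<in> SS" "z \<in> SS"
    then obtain D1 D2 D3 where d: "D1 \<in> set Ds" "D2 \<in> set Ds" "D3 \<in> set Ds"
      and e: "x = HJ D1" "y = HJ D2" "z = HJ D3" unfolding SS_def by blast
    have "x \<sqinter> (y \<squnion> z) = HJ (D1 \<inter> (D2 \<union> D3))"
      using e d join_HJ meet_HJ by metis
    also have "\<dots> = HJ ((D1 \<inter> D2) \<union> (D1 \<inter> D3))" by (simp add: Int_Un_distrib)
    also have "\<dots> = x \<sqinter> y \<squnion> x \<sqinter> z"
      using e d join_HJ meet_HJ by metis
    finally show "x \<sqinter> (y \<squnion> z) = x \<sqinter> y \<squnion> x \<sqinter> z" .
  qed
  show ?thesis unfolding kleene_sublattice_def by (intro conjI 1 2 3 4 5 6)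
qed

lemma a_SS: "a \<in> SS" and b_SS: "b \<in> SS"
proof -
  have b: "{0,1,2} \<in> set Ds" "{0,1,2,3,4,5} \<in> set Ds"
    by (simp_all add: Ds_def DM_def)
  have "HJ {0,1,2} = a" by (simp add: HJ_def fj_def g_def upt9 sup_absorb2)
  thus "a \<in> SS" using b unfolding SS_def by (metis image_eqI)
  have "HJ {0,1,2,3,4,5} = b" using ab
    by (simp add: HJ_def fj_def g_def upt9 le_infI1 sup_absorb2 inf_absorb1 le_supI)
  thus "b \<in> SS" using b unfolding SS_def by (metis image_eqI)
qed

end

lemma ksl_bot: "kleene_sublattice c K \<Longrightarrow> bot \<in> K" by (simp add: kleene_sublattice_def)
lemma ksl_top: "kleene_sublattice c K \<Longrightarrow> top \<in> K" by (simp add: kleene_sublattice_def)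
lemma ksl_inf: "kleene_sublattice c K \<Longrightarrow> x \<in> K \<Longrightarrow> y \<in> K \<Longrightarrow> inf x y \<in> K" by (simp add: kleene_sublattice_def)
lemma ksl_sup: "kleene_sublattice c K \<Longrightarrow> x \<in> K \<Longrightarrow> y \<in> K \<Longrightarrow> sup x y \<in> K" by (simp add: kleene_sublattice_def)
lemma ksl_c: "kleene_sublattice c K \<Longrightarrow> x \<in> K \<Longrightarrow> c x \<in> K" by (simp add: kleene_sublattice_def)
lemma ksl_dist: "kleene_sublattice c K \<Longrightarrow> x \<in> K \<Longrightarrow> y \<in> K \<Longrightarrow> z \<in> K \<Longrightarrow> inf x (sup y z) = sup (inf x y) (inf x z)" by (simp add: kleene_sublattice_def)

context pkl begin

lemma ext_block:
  assumes S: "kleene_sublattice c S"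
  shows "\<exists>K. kleene_block c K \<and> S \<subseteq> K"
proof -
  let ?A = "{L. kleene_sublattice c L \<and> S \<subseteq> L}"
  have "\<exists>M\<in>?A. \<forall>X\<in>?A. M \<subseteq> X \<longrightarrow> X = M"
  proof (rule subset_Zorn_nonempty)
    have "S \<in> ?A" using S by simp
    thus "?A \<noteq> {}" by blast
  next
    fix C assume ne: "C \<noteq> {}" and ch: "subset.chain ?A C"
    have CA: "C \<subseteq> ?A" and tot0: "\<forall>X\<in>C. \<forall>Y\<in>C. X \<subseteq> Y \<or> Y \<subseteq> X"
      using ch by (simp_all add: subset_chain_def)
    have tot: "\<And>X Y. X \<in> C \<Longrightarrow> Y \<in> C \<Longrightarrow> X \<subseteq> Y \<or> Y \<subseteq> X" using tot0 by blast
    have up2: "\<exists>L\<in>C. X \<subseteq> L \<and> Y \<subseteq> L" if "X \<in> C" "Y \<in> C" for X Y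
      using tot[OF that] that by blast
    have up3: "\<exists>L\<in>C. X \<subseteq> L \<and> Y \<subseteq> L \<and> Z \<subseteq> L" if h: "X \<in> C" "Y \<in> C" "Z \<in> C" for X Y Z
    proof -
      obtain L1 where "L1 \<in> C" "X \<subseteq> L1" "Y \<subseteq> L1" using up2[OF h(1,2)] by blast
      moreover obtain L2 where "L2 \<in> C" "L1 \<subseteq> L2" "Z \<subseteq> L2" using up2[OF \<open>L1 \<in> C\<close> h(3)] by blast
      ultimately show ?thesis by blast
    qed
    obtain L0 where L0: "L0 \<in> C" using ne by blast
    have ks: "\<And>L. L \<in> C \<Longrightarrow> kleene_sublattice c L" and sub: "\<And>L. L \<in> C \<Longrightarrow> S \<subseteq> L"
      using CA by auto
    have "kleene_sublattice c (\<Union>C)"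
      unfolding kleene_sublattice_def
    proof (intro conjI ballI)
      show "bot \<in> \<Union>C" using ksl_bot[OF ks[OF L0]] L0 by blast
      show "top \<in> \<Union>C" using ksl_top[OF ks[OF L0]] L0 by blast
    next
      fix x y assume "x \<in> \<Union>C" "y \<in> \<Union>C"
      then obtain X Y where "X \<in> C" "Y \<in> C" "x \<in> X" "y \<in> Y" by blast
      then obtain L where l: "L \<in> C" "x \<in> L" "y \<in> L" using up3[of X Y Y] by blast
      show "x \<sqinter> y \<in> \<Union>C" using ksl_inf[OF ks[OF l(1)] l(2,3)] l(1) by blast
      show "x \<squnion> y \<in> \<Union>C" using ksl_sup[OF ks[OF l(1)] l(2,3)] l(1) by blast
    next
      fix x assume "x \<in> \<Union>C"
      then obtain L where l: "L \<in> C" "x \<in> L" by blast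
      show "c x \<in> \<Union>C" using ksl_c[OF ks[OF l(1)] l(2)] l(1) by blast
    next
      fix x y z assume "x \<in> \<Union>C" "y \<in> \<Union>C" "z \<in> \<Union>C"
      then obtain X Y Z where "X \<in> C" "Y \<in> C" "Z \<in> C" "x \<in> X" "y \<in> Y" "z \<in> Z" by blast
      then obtain L where l: "L \<in> C" "x \<in> L" "y \<in> L" "z \<in> L" using up3[of X Y Z] by blast
      show "x \<sqinter> (y \<squnion> z) = x \<sqinter> y \<squnion> x \<sqinter> z" by (rule ksl_dist[OF ks[OF l(1)] l(2,3,4)])
    qed
    moreover have "S \<subseteq> \<Union>C" using sub[OF L0] L0 by blast
    ultimately show "\<Union>C \<in> ?A" by blast
  qed
  then obtain M where M: "M \<in> ?A" and mx: "\<forall>X\<in>?A. M \<subseteq> X \<longrightarrow> X = M" by (rule bexE)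
  have M1: "kleene_sublattice c M" and M2: "S \<subseteq> M" using M by simp_all
  have "kleene_block c M" unfolding kleene_block_def
  proof (intro conjI allI impI)
    show "kleene_sublattice c M" by (rule M1)
    fix L assume L: "kleene_sublattice c L \<and> M \<subseteq> L"
    hence "L \<in> ?A" using M2 by auto
    thus "L = M" using mx L by simp
  qed
  thus ?thesis using M2 by blast
qed


lemma block_sp_aux:
  assumes H: "\<And>x y. x \<le> y \<Longrightarrow> \<exists>K. kleene_block c K \<and> x \<in> K \<and> y \<in> K"
  and xy: "x \<le> y"
  shows "(c x \<sqinter> y = x \<sqinter> c x \<squnion> y \<sqinter> c y \<longrightarrow> y \<sqinter> (x \<squnion> c x) = x \<squnion> y \<sqinter> c y)
    \<and> x \<sqinter> c x \<squnion> y \<sqinter> c y = c x \<sqinter> y \<sqinter> c (c x \<sqinter> y)"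
proof (intro conjI impI)
  obtain K where K: "kleene_sublattice c K" "x \<in> K" "y \<in> K" using H[OF xy] unfolding kleene_block_def by blast
  note cl = ksl_inf[OF K(1)] ksl_c[OF K(1)]
  note dist = ksl_dist[OF K(1)]
  have cyx: "c y \<le> c x" using xy by (rule anti)
  {
    assume h: "c x \<sqinter> y = x \<sqinter> c x \<squnion> y \<sqinter> c y"
    have "y \<sqinter> (x \<squnion> c x) = y \<sqinter> x \<squnion> y \<sqinter> c x" using dist[OF K(3) K(2) cl(2)[OF K(2)]] .
    also have "\<dots> = x \<squnion> (x \<sqinter> c x \<squnion> y \<sqinter> c y)" using xy h by (simp add: inf_absorb1 inf_absorb2 inf_commute)
    also have "\<dots> = x \<squnion> y \<sqinter> c y" by (simp add: sup_assoc[symmetric] sup_absorb1)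
    finally show "y \<sqinter> (x \<squnion> c x) = x \<squnion> y \<sqinter> c y" .
  }
  have "(c x \<sqinter> y) \<sqinter> c (c x \<sqinter> y) = (c x \<sqinter> y) \<sqinter> (x \<squnion> c y)" by simp
  also have "\<dots> = (c x \<sqinter> y) \<sqinter> x \<squnion> (c x \<sqinter> y) \<sqinter> c y"
    using dist[OF cl(1)[OF cl(2)[OF K(2)] K(3)] K(2) cl(2)[OF K(3)]] .
  also have "\<dots> = x \<sqinter> c x \<squnion> y \<sqinter> c y"
  proof -
    have "(c x \<sqinter> y) \<sqinter> x = x \<sqinter> c x" by (metis inf_assoc inf_absorb2[OF xy] inf_commute)
    moreover have "(c x \<sqinter> y) \<sqinter> c y = y \<sqinter> c y" by (metis inf_assoc inf_absorb2[OF cyx] inf_commute)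
    ultimately show ?thesis by simp
  qed
  finally show "x \<sqinter> c x \<squnion> y \<sqinter> c y = c x \<sqinter> y \<sqinter> c (c x \<sqinter> y)" by simp
qed


lemma block_sp:
  assumes H: "\<And>x y. x \<le> y \<Longrightarrow> \<exists>K. kleene_block c K \<and> x \<in> K \<and> y \<in> K"
  shows "sp_orthomodular c"
  unfolding sp_orthomodular_def using block_sp_aux[OF H] by blast

end


theorem theorem3p13:
  fixes c :: "'a::bounded_lattice \<Rightarrow> 'a"
  assumes "pseudo_kleene c"
  shows "sp_orthomodular c \<longleftrightarrow>
    (\<forall>x y. x \<le> y \<longleftrightarrow> (\<exists>K. kleene_block c K \<and> x \<in> K \<and> y \<in> K \<and> x \<le> y))"
proof -
  interpret pkl c using assms unfolding pseudo_kleene_def by unfold_locales blast+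
  show ?thesis
  proof
    assume sp: "sp_orthomodular c"
    interpret spl c using sp unfolding sp_orthomodular_def by unfold_locales blast+
    show "\<forall>x y. x \<le> y \<longleftrightarrow> (\<exists>K. kleene_block c K \<and> x \<in> K \<and> y \<in> K \<and> x \<le> y)"
    proof (intro allI iffI)
      fix x y :: 'a assume xy: "x \<le> y"
      interpret spab c x y by unfold_locales (rule xy)
      obtain K where "kleene_block c K" "SS \<subseteq> K" using ext_block[OF SS_kleene] by blast
      thus "\<exists>K. kleene_block c K \<and> x \<in> K \<and> y \<in> K \<and> x \<le> y" using a_SS b_SS xy by blast
    next
      fix x y :: 'a assume "\<exists>K. kleene_block c K \<and> x \<in> K \<and> y \<in> K \<and> x \<le> y"
      thus "x \<le> y" by blast
    qed
  next
    assume H: "\<forall>x y. x \<le> y \<longleftrightarrow> (\<exists>K. kleene_block c K \<and> x \<in> K \<and> y \<in> K \<and> x \<le> y)"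
    show "sp_orthomodular c"
    proof (rule block_sp)
      fix x y :: 'a assume "x \<le> y"
      thus "\<exists>K. kleene_block c K \<and> x \<in> K \<and> y \<in> K" using H by blast
    qed
  qed
qed

end
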